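(* Let $k\ge1$, $d\ge1$ and $n_1,\dots,n_k\ge2$ be integers and $n:=n_1\cdots n_k$. There exists a $\Sigma_k(n_1,\dots,n_k)$-equivariant (continuous) map \[ C_k(d;n_1,\dots,n_k)\longrightarrow F(\mathbb{R}^d,n), \] where $\Sigma_k(n_1,\dots,n_k)$ acts on $F(\mathbb{R}^d,n)$ via the inclusion $\Sigma_k(n_1,\dots,n_k)\subseteq S_n$.
   Context: $F(\mathbb{R}^d,m)$ is the configuration space of $m$ pairwise distinct points in $\mathbb{R}^d$ with $S_m$ acting by $\tau\cdot(y_1,\dots,y_m)=(y_{\tau^{-1}(1)},\dots,y_{\tau^{-1}(m)})$. Wreath product action: if $G$ acts on $X$ and $S_m$ on $Y$, $G^{\times m}\rtimes S_m$ ($S_m$ permuting factors) acts on $X^{\times m}\times Y$ by $(g_1,\dots,g_m;\sigma)\cdot(x_1,\dots,x_m;y)=(g_1x_{\sigma^{-1}(1)},\dots,g_mx_{\sigma^{-1}(m)};\sigma y)$. $\Sigma_1(n_1)=S_{n_1}$, $\Sigma_k(n_1,\dots,n_k)=\Sigma_{k-1}(n_1,\dots,n_{k-1})^{\times n_k}\rtimes S_{n_k}$. $C_1(d;n_1)=F(\mathbb{R}^d,n_1)$, $C_k(d;n_1,\dots,n_k)=C_{k-1}(d;n_1,\dots,n_{k-1})^{\times n_k}\times F(\mathbb{R}^d,n_k)$ with the inductively defined wreath product action. Inclusion $\Sigma_k(n_1,\dots,n_k)\subseteq S_n$ (as the automorphisms of the rooted tree permuting its $n$ leaves): for $k=1$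 it is the identity; for $k\ge2$, with $n'=n_1\cdots n_{k-1}$, identify $[n]$ with $[n']\times[n_k]$ via $(i,j)\leftrightarrow(j-1)n'+i$, and let $(\Sigma_1,\dots,\Sigma_{n_k};\sigma)$ act by $(i,j)\mapsto(\Sigma_{\sigma(j)}(i),\sigma(j))$, where each $\Sigma_l\in\Sigma_{k-1}(n_1,\dots,n_{k-1})\subseteq S_{n'}$ inductively. *)

theory Defs
  imports "HOL-Analysis.Analysis" "HOL-Combinatorics.Permutations"
begin

text \<open>Conventions: indices are 0-based, so [m] = {1..m} is rendered as {..<m}.
  The sequence n_1,...,n_k is a function ns :: nat => nat (only ns 1, ..., ns k matter).
  R^d is an arbitrary Euclidean space type 'a (d = DIM('a) >= 1).\<close>

definition confF :: "nat \<Rightarrow> (nat \<Rightarrow> 'a) set" where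
  "confF m = {y \<in> PiE {..<m} (\<lambda>_. UNIV). inj_on y {..<m}}"

definition confF_top :: "nat \<Rightarrow> (nat \<Rightarrow> 'a::topological_space) topology" where
  "confF_top m = subtopology (product_topology (\<lambda>_. euclidean) {..<m}) (confF m)"

definition permact :: "nat \<Rightarrow> (nat \<Rightarrow> nat) \<Rightarrow> (nat \<Rightarrow> 'a) \<Rightarrow> (nat \<Rightarrow> 'a)" where
  "permact m \<tau> y = (\<lambda>i\<in>{..<m}. y (inv \<tau> i))"

text \<open>Coordinates of C_k: the configuration F(R^d, n_k) sits at indices [j], j < n_k;
  the j-th factor C_(k-1) sits at indices j # q, q a coordinate of C_(k-1).\<close>
fun idx :: "(nat \<Rightarrow> nat) \<Rightarrow> nat \<Rightarrow> nat list set" where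
  "idx ns 0 = {}"
| "idx ns (Suc k) = {[j] | j. j < ns (Suc k)} \<union> {j # q | j q. j < ns (Suc k) \<and> q \<in> idx ns k}"

text \<open>C_k(d; n_1,...,n_k) = C_(k-1)^(n_k) x F(R^d, n_k); C_0 is a point, so C_1 = F(R^d, n_1).\<close>
fun conf :: "(nat \<Rightarrow> nat) \<Rightarrow> nat \<Rightarrow> (nat list \<Rightarrow> 'a) set" where
  "conf ns 0 = {\<lambda>_. undefined}"
| "conf ns (Suc k) = {c \<in> PiE (idx ns (Suc k)) (\<lambda>_. UNIV).
      (\<lambda>j\<in>{..<ns (Suc k)}. c [j]) \<in> confF (ns (Suc k)) \<and>
      (\<forall>j < ns (Suc k). (\<lambda>q\<in>idx ns k. c (j # q)) \<in> conf ns k)}"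

definition conf_top :: "(nat \<Rightarrow> nat) \<Rightarrow> nat \<Rightarrow> (nat list \<Rightarrow> 'a::topological_space) topology" where
  "conf_top ns k = subtopology (product_topology (\<lambda>_. euclidean) (idx ns k)) (conf ns k)"

text \<open>Elements of Sigma_k = Sigma_(k-1)^(n_k) \<rtimes> S_(n_k): g [] is the permutation sigma in S_(n_k),
  and (\<lambda>q. g (j # q)) is the j-th factor in Sigma_(k-1). Sigma_0 is trivial.\<close>
fun sigma :: "(nat \<Rightarrow> nat) \<Rightarrow> nat \<Rightarrow> (nat list \<Rightarrow> nat \<Rightarrow> nat) set" where
  "sigma ns 0 = UNIV"
| "sigma ns (Suc k) = {g. g [] permutes {..<ns (Suc k)} \<and> (\<forall>j < ns (Suc k). (\<lambda>q. g (j # q)) \<in> sigma ns k)}"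

text \<open>Wreath product action:
  (g_1..g_m; sigma) . (x_1..x_m; y) = (g_1 x_(sigma^-1 1), ..., g_m x_(sigma^-1 m); sigma y).\<close>
fun act :: "(nat \<Rightarrow> nat) \<Rightarrow> nat \<Rightarrow> (nat list \<Rightarrow> nat \<Rightarrow> nat) \<Rightarrow> (nat list \<Rightarrow> 'a) \<Rightarrow> (nat list \<Rightarrow> 'a)" where
  "act ns 0 g c = (\<lambda>_. undefined)"
| "act ns (Suc k) g c = (\<lambda>p. case p of
       [] \<Rightarrow> undefined
     | j # q \<Rightarrow> if j < ns (Suc k) then
          (if q = [] then c [inv (g []) j]
           else act ns k (\<lambda>r. g (j # r)) (\<lambda>r. c (inv (g []) j # r)) q)
        else undefined)"

text \<open>Inclusion Sigma_k into S_n, n = n_1 ... n_k, via (i,j) <-> j*n' + i (0-based),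
  (g_1..g_(n_k); sigma) maps (i,j) to (g_(sigma j)(i), sigma j).\<close>
fun emb :: "(nat \<Rightarrow> nat) \<Rightarrow> nat \<Rightarrow> (nat list \<Rightarrow> nat \<Rightarrow> nat) \<Rightarrow> nat \<Rightarrow> nat" where
  "emb ns 0 g = id"
| "emb ns (Suc k) g = (\<lambda>x.
     if x < (\<Prod>i\<in>{1..Suc k}. ns i) then
       (let n' = (\<Prod>i\<in>{1..k}. ns i); \<sigma> = g []; j = x div n'; i = x mod n'
        in \<sigma> j * n' + emb ns k (\<lambda>q. g (\<sigma> j # q)) i)
     else x)"

end

theory Submission
  imports Defs
begin

abbreviation P :: "(nat \<Rightarrow> nat) \<Rightarrow> nat \<Rightarrow> nat" where
  "P ns k \<equiv> \<Prod>i\<in>{1..k}. ns i"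

definition pairs :: "nat \<Rightarrow> (nat \<times> nat) set" where
  "pairs m = {(a,b). a < m \<and> b < m \<and> a \<noteq> b}"

definition rad :: "nat \<Rightarrow> (nat list \<Rightarrow> 'a::real_normed_vector) \<Rightarrow> real" where
  "rad m c = Min ((\<lambda>(a,b). dist (c [a]) (c [b])) ` pairs m) / 2"

definition phi :: "'a::real_normed_vector \<Rightarrow> 'a" where
  "phi x = (1 / (1 + norm x)) *\<^sub>R x"

fun FF :: "(nat \<Rightarrow> nat) \<Rightarrow> nat \<Rightarrow> (nat list \<Rightarrow> 'a::real_normed_vector) \<Rightarrow> nat \<Rightarrow> 'a" where
  "FF ns 0 c = (\<lambda>i\<in>{..<1}. 0)"
| "FF ns (Suc k) c = (\<lambda>x\<in>{..<P ns (Suc k)}.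
      c [x div P ns k] + rad (ns (Suc k)) c *\<^sub>R
        phi (FF ns k (\<lambda>q\<in>idx ns k. c (x div P ns k # q)) (x mod P ns k)))"

lemma P_Suc: "P ns (Suc k) = P ns k * ns (Suc k)"
  by (simp add: prod.nat_ivl_Suc' mult.commute)

lemma P_pos: "\<forall>i\<in>{1..k}. ns i \<ge> 2 \<Longrightarrow> P ns k > 0"
proof (induction k)
  case (Suc k)
  have "ns (Suc k) \<ge> 2" "P ns k > 0" using Suc.prems Suc.IH by auto
  then show ?case by (simp only: P_Suc) simp
qed simp

lemma idx_nonempty: "q \<in> idx ns k \<Longrightarrow> q \<noteq> []"
  by (cases k) auto

lemma finite_pairs: "finite (pairs m)"
proof -
  have "pairs m \<subseteq> {..<m} \<times> {..<m}" by (auto simp: pairs_def)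
  then show ?thesis by (rule finite_subset) auto
qed

lemma pairs_ne: "m \<ge> 2 \<Longrightarrow> pairs m \<noteq> {}"
proof -
  assume "m \<ge> 2" then have "(0,1) \<in> pairs m" by (auto simp: pairs_def)
  then show ?thesis by auto
qed

lemma phi_norm: "norm (phi x) < 1"
proof -
  have "norm (phi x) = norm x / (1 + norm x)"
    by (simp add: phi_def)
  also have "\<dots> < 1" by (simp add: add_pos_nonneg)
  finally show ?thesis .
qed

lemma phi_inj: "phi a = phi b \<Longrightarrow> a = b"
proof -
  assume h: "phi a = phi b"
  have na: "norm (phi a) = norm a / (1 + norm a)" and nb: "norm (phi b) = norm b / (1 + norm b)"
    by (simp_all add: phi_def)
  have "norm a / (1 + norm a) = norm b / (1 + norm b)" using h na nb by simp
  then have "norm a * (1 + norm b) = norm b * (1 + norm a)"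
    by (subst (asm) frac_eq_eq) (auto simp: add_pos_nonneg add_nonneg_eq_0_iff)
  then have e: "norm a = norm b" by (simp add: algebra_simps)
  have pa: "1 + norm a > 0" "1 + norm b > 0" by (auto intro: add_pos_nonneg)
  have "a = (1 + norm a) *\<^sub>R phi a" using pa by (simp add: phi_def)
  also have "\<dots> = (1 + norm b) *\<^sub>R phi b" using e h by simp
  also have "\<dots> = b" using pa by (simp add: phi_def)
  finally show ?thesis .
qed

lemma rad_pos:
  assumes "m \<ge> 2" "inj_on (\<lambda>j. c [j]) {..<m}"
  shows "rad m c > 0"
proof -
  have "Min ((\<lambda>(a,b). dist (c [a]) (c [b])) ` pairs m) > 0"
  proof (subst Min_gr_iff)
    show "finite ((\<lambda>(a,b). dist (c [a]) (c [b])) ` pairs m)" using finite_pairs by blast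
    show "(\<lambda>(a,b). dist (c [a]) (c [b])) ` pairs m \<noteq> {}" using pairs_ne assms(1) by blast
    show "\<forall>x\<in>(\<lambda>(a,b). dist (c [a]) (c [b])) ` pairs m. 0 < x"
    proof
      fix x assume "x \<in> (\<lambda>(a,b). dist (c [a]) (c [b])) ` pairs m"
      then obtain a b where "a < m" "b < m" "a \<noteq> b" "x = dist (c [a]) (c [b])"
        by (auto simp: pairs_def)
      moreover have "c [a] \<noteq> c [b]" using assms(2) calculation inj_onD[of "\<lambda>j. c [j]" "{..<m}" a b] by auto
      ultimately show "0 < x" by simp
    qed
  qed
  then show ?thesis by (simp add: rad_def)
qed

lemma rad_le:
  assumes "a < m" "b < m" "a \<noteq> b"
  shows "2 * rad m c \<le> dist (c [a]) (c [b])"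
proof -
  have "(a,b) \<in> pairs m" using assms by (auto simp: pairs_def)
  then have "Min ((\<lambda>(a,b). dist (c [a]) (c [b])) ` pairs m) \<le> dist (c [a]) (c [b])"
    using finite_pairs by (intro Min_le) force+
  then show ?thesis by (simp add: rad_def)
qed

lemma rad_cong: "(\<And>j. j < m \<Longrightarrow> c [j] = d [j]) \<Longrightarrow> rad m c = rad m d"
  unfolding rad_def
  by (intro arg_cong[where f="\<lambda>x. Min x / 2"] image_cong refl) (auto simp: pairs_def)

lemma rad_perm:
  assumes "\<sigma> permutes {..<m}" "\<And>a. a < m \<Longrightarrow> d [a] = c [inv \<sigma> a]"
  shows "rad m d = rad m c"
proof -
  have "(\<lambda>(a,b). dist (d [a]) (d [b])) ` pairs m = (\<lambda>(a,b). dist (c [a]) (c [b])) ` pairs m"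
  proof (intro equalityI subsetI)
    fix y assume "y \<in> (\<lambda>(a,b). dist (d [a]) (d [b])) ` pairs m"
    then obtain a b where ab: "a < m" "b < m" "a \<noteq> b" "y = dist (d [a]) (d [b])"
      by (auto simp: pairs_def)
    have "(inv \<sigma> a, inv \<sigma> b) \<in> pairs m"
    proof -
      have "inv \<sigma> a \<noteq> inv \<sigma> b"
        using ab(3) permutes_inverses(1)[OF assms(1)] by metis
      then show ?thesis
        using ab permutes_in_image[OF permutes_inv[OF assms(1)]] by (auto simp: pairs_def)
    qed
    then show "y \<in> (\<lambda>(a,b). dist (c [a]) (c [b])) ` pairs m"
      using ab assms(2) by (auto intro!: image_eqI[of _ _ "(inv \<sigma> a, inv \<sigma> b)"])
  next
    fix y assume "y \<in> (\<lambda>(a,b). dist (c [a]) (c [b])) ` pairs m"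
    then obtain a b where ab: "a < m" "b < m" "a \<noteq> b" "y = dist (c [a]) (c [b])"
      by (auto simp: pairs_def)
    have "(\<sigma> a, \<sigma> b) \<in> pairs m"
      using ab permutes_in_image[OF assms(1)] permutes_inj[OF assms(1)]
      by (auto simp: pairs_def inj_eq)
    moreover have "d [\<sigma> a] = c [a]" "d [\<sigma> b] = c [b]"
      using ab assms permutes_in_image[OF assms(1)] permutes_inverses(2)[OF assms(1)] by auto
    ultimately show "y \<in> (\<lambda>(a,b). dist (d [a]) (d [b])) ` pairs m"
      using ab by (auto intro!: image_eqI[of _ _ "(\<sigma> a, \<sigma> b)"])
  qed
  then show ?thesis by (simp add: rad_def)
qed

lemma act_local:
  "g \<in> sigma ns k \<Longrightarrow> (\<forall>q\<in>idx ns k. c q = c' q) \<Longrightarrow> q \<in> idx ns k \<Longrightarrow>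
   act ns k g c q = act ns k g c' q"
proof (induction k arbitrary: g c c' q)
  case 0
  then show ?case by simp
next
  case (Suc k)
  let ?m = "ns (Suc k)"
  have \<sigma>: "g [] permutes {..<?m}" using Suc.prems by simp
  from Suc.prems(3) consider j where "j < ?m" "q = [j]"
    | j q' where "j < ?m" "q' \<in> idx ns k" "q = j # q'" by auto
  then show ?case
  proof cases
    case 1
    have "inv (g []) j < ?m" using permutes_in_image[OF permutes_inv[OF \<sigma>]] 1 by simp
    then have "[inv (g []) j] \<in> idx ns (Suc k)" by simp
    then show ?thesis using 1 Suc.prems(2) by simp
  next
    case 2
    have ij: "inv (g []) j < ?m" using permutes_in_image[OF permutes_inv[OF \<sigma>]] 2 by simp
    have gj: "(\<lambda>r. g (j # r)) \<in> sigma ns k" using Suc.prems(1) 2 by simp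
    have "\<forall>r\<in>idx ns k. c (inv (g []) j # r) = c' (inv (g []) j # r)"
      using Suc.prems(2) ij by simp
    from Suc.IH[OF gj this 2(2)] show ?thesis using 2 idx_nonempty[OF 2(2)] by simp
  qed
qed

lemma div_lt_P: "x < P ns (Suc k) \<Longrightarrow> x div P ns k < ns (Suc k)"
  by (metis P_Suc less_mult_imp_div_less mult.commute)

lemma mod_lt_P: "x < P ns (Suc k) \<Longrightarrow> x mod P ns k < P ns k"
proof -
  assume "x < P ns (Suc k)"
  then have "P ns k \<noteq> 0" by (metis P_Suc mult_0 not_less0)
  then show ?thesis by simp
qed

lemma lin_lt: "a < m \<Longrightarrow> b < (n::nat) \<Longrightarrow> a * n + b < n * m"
proof -
  assume "a < m" "b < n"
  then have "a * n + b < (a + 1) * n" by simp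
  also have "\<dots> \<le> m * n" using \<open>a < m\<close> by (intro mult_le_mono1) simp
  finally show ?thesis by (simp add: mult.commute)
qed

lemma FF_local:
  assumes "\<forall>q\<in>idx ns k. c q = c' q"
  shows "FF ns k c = FF ns k c'"
proof (cases k)
  case 0
  then show ?thesis by simp
next
  case (Suc k')
  have r: "rad (ns (Suc k')) c = rad (ns (Suc k')) c'"
    using assms Suc by (intro rad_cong) auto
  have s: "\<And>j. j < ns (Suc k') \<Longrightarrow> (\<lambda>q\<in>idx ns k'. c (j # q)) = (\<lambda>q\<in>idx ns k'. c' (j # q))"
    using assms Suc by (auto simp: restrict_def fun_eq_iff)
  have h: "\<And>j. j < ns (Suc k') \<Longrightarrow> c [j] = c' [j]" using assms Suc by auto
  show ?thesis
    unfolding Suc FF.simps r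
  proof (intro restrict_ext)
    fix x assume "x \<in> {..<P ns (Suc k')}"
    then have "x < P ns (Suc k')" by (simp only: lessThan_iff)
    then have jd: "x div P ns k' < ns (Suc k')" by (rule div_lt_P)
    show "c [x div P ns k'] + rad (ns (Suc k')) c' *\<^sub>R phi (FF ns k' (\<lambda>q\<in>idx ns k'. c (x div P ns k' # q)) (x mod P ns k')) =
          c' [x div P ns k'] + rad (ns (Suc k')) c' *\<^sub>R phi (FF ns k' (\<lambda>q\<in>idx ns k'. c' (x div P ns k' # q)) (x mod P ns k'))"
      by (simp only: s[OF jd] h[OF jd])
  qed
qed

lemma emb_Suc_alt:
  "x < P ns (Suc k) \<Longrightarrow> emb ns (Suc k) g x =
     g [] (x div P ns k) * P ns k + emb ns k (\<lambda>q. g (g [] (x div P ns k) # q)) (x mod P ns k)"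
  by (simp add: Let_def)

lemma emb_Suc_eq:
  assumes "j < ns (Suc k)" "i < P ns k"
  shows "emb ns (Suc k) g (j * P ns k + i) = g [] j * P ns k + emb ns k (\<lambda>q. g (g [] j # q)) i"
proof -
  have "j * P ns k + i < P ns (Suc k)" using lin_lt[OF assms] by (simp add: P_Suc)
  moreover have "P ns k > 0" using assms(2) by linarith
  then have "(j * P ns k + i) div P ns k = j" "(j * P ns k + i) mod P ns k = i"
    using assms(2) by simp_all
  ultimately show ?thesis by (simp add: Let_def)
qed

lemma emb_perm:
  "\<forall>i\<in>{1..k}. ns i \<ge> 2 \<Longrightarrow> g \<in> sigma ns k \<Longrightarrow> emb ns k g permutes {..<P ns k}"
proof (induction k arbitrary: g)
  case 0
  then show ?case using permutes_id[of "{..<1::nat}"] by (simp add: id_def)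
next
  case (Suc k)
  let ?m = "ns (Suc k)" and ?n = "P ns k"
  have \<sigma>: "g [] permutes {..<?m}" using Suc.prems by simp
  have npos: "?n > 0" using P_pos[of k ns] Suc.prems by auto
  have IH: "\<And>j. j < ?m \<Longrightarrow> emb ns k (\<lambda>q. g (j # q)) permutes {..<?n}"
    using Suc.prems by (intro Suc.IH) auto
  define e where "e = emb ns (Suc k) g"
  have e_alt: "\<And>x. x < P ns (Suc k) \<Longrightarrow> e x = g [] (x div ?n) * ?n + emb ns k (\<lambda>q. g (g [] (x div ?n) # q)) (x mod ?n)"
    unfolding e_def by (rule emb_Suc_alt)
  have sj: "\<And>x. x < P ns (Suc k) \<Longrightarrow> g [] (x div ?n) < ?m"
    using permutes_in_image[OF \<sigma>] div_lt_P by simp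
  have ei: "\<And>x. x < P ns (Suc k) \<Longrightarrow> emb ns k (\<lambda>q. g (g [] (x div ?n) # q)) (x mod ?n) < ?n"
    using permutes_in_image[OF IH] sj mod_lt_P by simp
  have sub: "e ` {..<P ns (Suc k)} \<subseteq> {..<P ns (Suc k)}"
  proof
    fix y assume "y \<in> e ` {..<P ns (Suc k)}"
    then obtain x where x: "x < P ns (Suc k)" "y = e x" by auto
    show "y \<in> {..<P ns (Suc k)}"
      using lin_lt[OF sj[OF x(1)] ei[OF x(1)]] x e_alt by (simp add: P_Suc)
  qed
  have inj: "inj_on e {..<P ns (Suc k)}"
  proof (rule inj_onI)
    fix x1 x2 assume x1: "x1 \<in> {..<P ns (Suc k)}" and x2: "x2 \<in> {..<P ns (Suc k)}" and eq: "e x1 = e x2"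
    have x1': "x1 < P ns (Suc k)" and x2': "x2 < P ns (Suc k)" using x1 x2 by auto
    have d: "g [] (x1 div ?n) = g [] (x2 div ?n)"
      using arg_cong[OF eq, of "\<lambda>y. y div ?n"] e_alt[OF x1'] e_alt[OF x2'] ei[OF x1'] ei[OF x2'] npos by simp
    then have dj: "x1 div ?n = x2 div ?n" using permutes_inj[OF \<sigma>] by (simp add: inj_eq)
    have "emb ns k (\<lambda>q. g (g [] (x1 div ?n) # q)) (x1 mod ?n) = emb ns k (\<lambda>q. g (g [] (x1 div ?n) # q)) (x2 mod ?n)"
      using arg_cong[OF eq, of "\<lambda>y. y mod ?n"] e_alt[OF x1'] e_alt[OF x2'] ei[OF x1'] ei[OF x2'] d npos by simp
    then have "x1 mod ?n = x2 mod ?n"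
      using permutes_inj[OF IH[OF sj[OF x1']]] by (simp add: inj_eq)
    then show "x1 = x2" using dj by (metis div_mult_mod_eq)
  qed
  have "bij_betw e {..<P ns (Suc k)} {..<P ns (Suc k)}"
    unfolding bij_betw_def using inj endo_inj_surj[OF _ sub inj] by simp
  moreover have "\<And>x. x \<notin> {..<P ns (Suc k)} \<Longrightarrow> e x = x" unfolding e_def by simp
  ultimately show ?case unfolding e_def[symmetric] by (rule bij_imp_permutes)
qed

lemma conf_sub: "conf ns k \<subseteq> PiE (idx ns k) (\<lambda>_. UNIV)"
  by (cases k) auto

lemma topspace_conf_top: "topspace (conf_top ns k) = conf ns k"
  using conf_sub[of ns k] by (auto simp: conf_top_def)

lemma topspace_confF_top: "topspace (confF_top m) = confF m"
  by (auto simp: confF_top_def confF_def)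

lemma FF_Suc_app:
  "x < P ns (Suc k) \<Longrightarrow> FF ns (Suc k) c x =
     c [x div P ns k] + rad (ns (Suc k)) c *\<^sub>R
        phi (FF ns k (\<lambda>q\<in>idx ns k. c (x div P ns k # q)) (x mod P ns k))"
  by simp

lemma conf_SucD:
  assumes "c \<in> conf ns (Suc k)"
  shows "inj_on (\<lambda>j. c [j]) {..<ns (Suc k)}"
    and "\<And>j. j < ns (Suc k) \<Longrightarrow> (\<lambda>q\<in>idx ns k. c (j # q)) \<in> conf ns k"
proof -
  have "(\<lambda>j\<in>{..<ns (Suc k)}. c [j]) \<in> confF (ns (Suc k))" using assms by simp
  then have "inj_on (\<lambda>j\<in>{..<ns (Suc k)}. c [j]) {..<ns (Suc k)}" by (simp add: confF_def)
  then show "inj_on (\<lambda>j. c [j]) {..<ns (Suc k)}"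
    by (rule inj_on_cong[THEN iffD1, rotated]) simp
  show "\<And>j. j < ns (Suc k) \<Longrightarrow> (\<lambda>q\<in>idx ns k. c (j # q)) \<in> conf ns k" using assms by simp
qed

lemma FF_mem:
  "\<forall>i\<in>{1..k}. ns i \<ge> 2 \<Longrightarrow> c \<in> conf ns k \<Longrightarrow> FF ns k c \<in> confF (P ns k)"
proof (induction k arbitrary: c)
  case 0
  have p: "P ns 0 = 1" by simp
  have e: "FF ns 0 c \<in> extensional {..<1}" by (simp only: FF.simps restrict_extensional)
  have i: "inj_on (FF ns 0 c) {..<1}" by (simp add: inj_on_def)
  show ?case unfolding p confF_def PiE_def using e i by blast
next
  case (Suc k)
  let ?m = "ns (Suc k)" and ?n = "P ns k" and ?N = "P ns (Suc k)"
  define r where "r = rad ?m c"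
  have m2: "?m \<ge> 2" using Suc.prems by auto
  have injc: "inj_on (\<lambda>j. c [j]) {..<?m}" using conf_SucD(1)[OF Suc.prems(2)] .
  have rpos: "r > 0" unfolding r_def using rad_pos[OF m2 injc] .
  have IH: "\<And>j. j < ?m \<Longrightarrow> FF ns k (\<lambda>q\<in>idx ns k. c (j # q)) \<in> confF ?n"
  proof -
    fix j assume j: "j < ?m"
    have h1: "\<forall>i\<in>{1..k}. ns i \<ge> 2" using Suc.prems(1) by auto
    show "FF ns k (\<lambda>q\<in>idx ns k. c (j # q)) \<in> confF ?n"
      by (rule Suc.IH[OF h1 conf_SucD(2)[OF Suc.prems(2) j]])
  qed
  have app: "\<And>x. x < ?N \<Longrightarrow> FF ns (Suc k) c x =
     c [x div ?n] + r *\<^sub>R phi (FF ns k (\<lambda>q\<in>idx ns k. c (x div ?n # q)) (x mod ?n))"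
    unfolding r_def by (rule FF_Suc_app)
  have "inj_on (FF ns (Suc k) c) {..<?N}"
  proof (rule inj_onI)
    fix x1 x2 assume "x1 \<in> {..<?N}" "x2 \<in> {..<?N}" and eq: "FF ns (Suc k) c x1 = FF ns (Suc k) c x2"
    then have x1: "x1 < ?N" and x2: "x2 < ?N" by auto
    define j1 where "j1 = x1 div ?n"
    define j2 where "j2 = x2 div ?n"
    define a1 where "a1 = FF ns k (\<lambda>q\<in>idx ns k. c (j1 # q)) (x1 mod ?n)"
    define a2 where "a2 = FF ns k (\<lambda>q\<in>idx ns k. c (j2 # q)) (x2 mod ?n)"
    have j1: "j1 < ?m" and j2: "j2 < ?m" unfolding j1_def j2_def using x1 x2 div_lt_P by auto
    have e: "c [j1] + r *\<^sub>R phi a1 = c [j2] + r *\<^sub>R phi a2"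
      using eq app[OF x1] app[OF x2] unfolding j1_def j2_def a1_def a2_def by simp
    show "x1 = x2"
    proof (cases "j1 = j2")
      case False
      have "2 * r \<le> dist (c [j1]) (c [j2])" unfolding r_def using rad_le[OF j1 j2 False] .
      also have "dist (c [j1]) (c [j2]) = norm (r *\<^sub>R phi a2 - r *\<^sub>R phi a1)"
      proof -
        have "c [j1] = (c [j2] + r *\<^sub>R phi a2) - r *\<^sub>R phi a1"
          using e by (simp only: eq_diff_eq)
        then have "c [j1] - c [j2] = r *\<^sub>R phi a2 - r *\<^sub>R phi a1" by (simp add: algebra_simps)
        then show ?thesis by (simp add: dist_norm)
      qed
      also have "\<dots> \<le> norm (r *\<^sub>R phi a2) + norm (r *\<^sub>R phi a1)" by (rule norm_triangle_ineq4)
      also have "\<dots> = r * norm (phi a2) + r * norm (phi a1)" using rpos by simp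
      also have "\<dots> < r * 1 + r * 1"
        using rpos phi_norm[of a1] phi_norm[of a2] by (intro add_strict_mono mult_strict_left_mono) auto
      finally show ?thesis by simp
    next
      case True
      then have "r *\<^sub>R phi a1 = r *\<^sub>R phi a2" using e by simp
      then have "phi a1 = phi a2" using rpos by simp
      then have "a1 = a2" by (rule phi_inj)
      moreover have "inj_on (FF ns k (\<lambda>q\<in>idx ns k. c (j1 # q))) {..<?n}"
        using IH[OF j1] by (simp add: confF_def)
      ultimately have "x1 mod ?n = x2 mod ?n"
        unfolding a1_def a2_def using True mod_lt_P[OF x1] mod_lt_P[OF x2] by (auto dest: inj_onD)
      then show ?thesis using True unfolding j1_def j2_def by (metis div_mult_mod_eq)
    qed
  qed
  moreover have "FF ns (Suc k) c \<in> extensional {..<?N}"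
    unfolding FF.simps(2) by (rule restrict_extensional)
  ultimately show ?case unfolding confF_def PiE_def by blast
qed

lemma FF_equi:
  "\<forall>i\<in>{1..k}. ns i \<ge> 2 \<Longrightarrow> g \<in> sigma ns k \<Longrightarrow> c \<in> conf ns k \<Longrightarrow>
   FF ns k (act ns k g c) = permact (P ns k) (emb ns k g) (FF ns k c)"
proof (induction k arbitrary: g c)
  case 0
  then show ?case by (auto simp: permact_def restrict_def fun_eq_iff)
next
  case (Suc k)
  let ?m = "ns (Suc k)" and ?n = "P ns k" and ?N = "P ns (Suc k)"
  define \<sigma> where "\<sigma> = g []"
  have \<sigma>: "\<sigma> permutes {..<?m}" using Suc.prems unfolding \<sigma>_def by simp
  have gsub: "\<And>j. j < ?m \<Longrightarrow> (\<lambda>q. g (j # q)) \<in> sigma ns k" using Suc.prems by simp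
  have npos: "?n > 0" using P_pos[of k ns] Suc.prems by auto
  have E: "emb ns (Suc k) g permutes {..<?N}" using Suc.prems by (intro emb_perm) auto
  have Ek: "\<And>j. j < ?m \<Longrightarrow> emb ns k (\<lambda>q. g (j # q)) permutes {..<?n}"
    using Suc.prems gsub by (intro emb_perm) auto
  show ?case
  proof (rule ext)
    fix x
    show "FF ns (Suc k) (act ns (Suc k) g c) x = permact ?N (emb ns (Suc k) g) (FF ns (Suc k) c) x"
    proof (cases "x < ?N")
      case False
      then show ?thesis by (simp add: permact_def)
    next
      case True
      define j where "j = x div ?n"
      define i where "i = x mod ?n"
      have j: "j < ?m" unfolding j_def using div_lt_P[OF True] .
      have i: "i < ?n" unfolding i_def using mod_lt_P[OF True] .
      have xji: "x = j * ?n + i" unfolding j_def i_def by (metis div_mult_mod_eq)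
      define j' where "j' = inv \<sigma> j"
      have j': "j' < ?m" unfolding j'_def using permutes_in_image[OF permutes_inv[OF \<sigma>]] j by simp
      have sj': "\<sigma> j' = j" unfolding j'_def using permutes_inverses(1)[OF \<sigma>] .
      define gj where "gj = (\<lambda>q. g (j # q))"
      define cj where "cj = (\<lambda>r. c (j' # r))"
      define i' where "i' = inv (emb ns k gj) i"
      have i': "i' < ?n" unfolding i'_def gj_def using permutes_in_image[OF permutes_inv[OF Ek[OF j]]] i by simp
      have ei': "emb ns k gj i' = i" unfolding i'_def gj_def using permutes_inverses(1)[OF Ek[OF j]] .
      define y where "y = j' * ?n + i'"
      have Ey: "emb ns (Suc k) g y = x"
        unfolding y_def using emb_Suc_eq[OF j' i', of g] sj' ei' xji
        unfolding \<sigma>_def gj_def by simp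
      have invE: "inv (emb ns (Suc k) g) x = y" using permutes_inverses(2)[OF E, of y] Ey by simp
      have y: "y < ?N" unfolding y_def using lin_lt[OF j' i'] by (simp add: P_Suc)
      have ydiv: "y div ?n = j'" and ymod: "y mod ?n = i'" unfolding y_def using i' npos by simp_all
      have rhs: "permact ?N (emb ns (Suc k) g) (FF ns (Suc k) c) x =
          c [j'] + rad ?m c *\<^sub>R phi (FF ns k (\<lambda>q\<in>idx ns k. c (j' # q)) i')"
        using True invE FF_Suc_app[OF y, of c] ydiv ymod by (simp add: permact_def del: FF.simps)
      have a1: "act ns (Suc k) g c [j] = c [j']" using j unfolding j'_def \<sigma>_def by simp
      have a2: "rad ?m (act ns (Suc k) g c) = rad ?m c"
        by (rule rad_perm[OF \<sigma>]) (simp add: \<sigma>_def)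
      have "FF ns k (\<lambda>q\<in>idx ns k. act ns (Suc k) g c (j # q)) = FF ns k (act ns k gj cj)"
        by (rule FF_local) (auto simp: gj_def cj_def j'_def \<sigma>_def j dest: idx_nonempty)
      also have "\<dots> = FF ns k (act ns k gj (restrict cj (idx ns k)))"
        by (rule FF_local) (auto intro!: act_local simp: gj_def gsub[OF j])
      also have "\<dots> = permact ?n (emb ns k gj) (FF ns k (restrict cj (idx ns k)))"
      proof -
        have h1: "\<forall>i\<in>{1..k}. ns i \<ge> 2" using Suc.prems(1) by auto
        have h2: "restrict cj (idx ns k) \<in> conf ns k"
          unfolding cj_def by (rule conf_SucD(2)[OF Suc.prems(3) j'])
        show ?thesis unfolding gj_def by (rule Suc.IH[OF h1 gsub[OF j] h2])
      qed
      finally have a3: "FF ns k (\<lambda>q\<in>idx ns k. act ns (Suc k) g c (j # q)) i =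
          FF ns k (\<lambda>q\<in>idx ns k. c (j' # q)) i'"
        using i unfolding i'_def cj_def by (simp add: permact_def)
      have "FF ns (Suc k) (act ns (Suc k) g c) x =
          act ns (Suc k) g c [j] + rad ?m (act ns (Suc k) g c) *\<^sub>R
            phi (FF ns k (\<lambda>q\<in>idx ns k. act ns (Suc k) g c (j # q)) i)"
        unfolding j_def i_def by (rule FF_Suc_app[OF True])
      also have "\<dots> = c [j'] + rad ?m c *\<^sub>R phi (FF ns k (\<lambda>q\<in>idx ns k. c (j' # q)) i')"
        by (simp only: a1 a2 a3)
      finally show ?thesis using rhs by simp
    qed
  qed
qed

lemma cm_scaleR:
  fixes g :: "'x \<Rightarrow> 'b::real_normed_vector"
  shows "continuous_map X euclideanreal f \<Longrightarrow> continuous_map X euclidean g \<Longrightarrow>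
    continuous_map X euclidean (\<lambda>x. f x *\<^sub>R g x)"
  by (simp add: continuous_map_atin tendsto_scaleR)

lemma Min_cont:
  "finite A \<Longrightarrow> A \<noteq> {} \<Longrightarrow> (\<forall>a\<in>A. continuous_map X euclideanreal (f a)) \<Longrightarrow>
   continuous_map X euclideanreal (\<lambda>x. Min ((\<lambda>a. f a x) ` A))"
proof (induction A rule: finite_ne_induct)
  case (singleton a)
  then show ?case by simp
next
  case (insert a A)
  have "(\<lambda>x. Min ((\<lambda>a. f a x) ` insert a A)) = (\<lambda>x. min (f a x) (Min ((\<lambda>a. f a x) ` A)))"
    using insert.hyps by (simp add: Min_insert)
  then show ?case using insert by (simp add: continuous_map_real_min)
qed

lemma proj_cont: "p \<in> idx ns k \<Longrightarrow> continuous_map (conf_top ns k) euclidean (\<lambda>c. c p)"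
  unfolding conf_top_def by (rule continuous_map_from_subtopology[OF continuous_map_product_projection])

lemma rad_cont:
  assumes "ns (Suc k) \<ge> 2"
  shows "continuous_map (conf_top ns (Suc k)) euclideanreal (\<lambda>c::nat list \<Rightarrow> 'a::real_normed_vector. rad (ns (Suc k)) c)"
proof -
  let ?m = "ns (Suc k)"
  have "continuous_map (conf_top ns (Suc k)) euclideanreal
          (\<lambda>c::nat list \<Rightarrow> 'a. Min ((\<lambda>p. (\<lambda>c. dist (c [fst p]) (c [snd p])) c) ` pairs ?m))"
  proof (rule Min_cont[OF finite_pairs pairs_ne[OF assms]], rule ballI)
    fix p assume "p \<in> pairs ?m"
    then have "[fst p] \<in> idx ns (Suc k)" "[snd p] \<in> idx ns (Suc k)" by (auto simp: pairs_def)
    then have "continuous_map (conf_top ns (Suc k)) euclidean (\<lambda>c::nat list \<Rightarrow> 'a. c [fst p])"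
         "continuous_map (conf_top ns (Suc k)) euclidean (\<lambda>c::nat list \<Rightarrow> 'a. c [snd p])"
      by (simp_all add: proj_cont)
    then have "continuous_map (conf_top ns (Suc k)) euclidean (\<lambda>c::nat list \<Rightarrow> 'a. norm (c [fst p] - c [snd p]))"
      by (intro continuous_map_norm continuous_map_diff) (assumption)+
    then show "continuous_map (conf_top ns (Suc k)) euclideanreal (\<lambda>c::nat list \<Rightarrow> 'a. dist (c [fst p]) (c [snd p]))"
      by (simp only: dist_norm)
  qed
  then have "continuous_map (conf_top ns (Suc k)) euclideanreal
          (\<lambda>c::nat list \<Rightarrow> 'a. Min ((\<lambda>p. (\<lambda>c. dist (c [fst p]) (c [snd p])) c) ` pairs ?m) / 2)"
    by (rule continuous_map_real_divide) auto
  then show ?thesis unfolding rad_def case_prod_beta' by simp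
qed

lemma sub_cont:
  assumes j: "j < ns (Suc k)"
  shows "continuous_map (conf_top ns (Suc k)) (conf_top ns k) (\<lambda>c. \<lambda>q\<in>idx ns k. c (j # q))"
  unfolding conf_top_def[of ns k] continuous_map_in_subtopology
proof
  show "continuous_map (conf_top ns (Suc k)) (product_topology (\<lambda>_. euclidean) (idx ns k))
     (\<lambda>c. \<lambda>q\<in>idx ns k. c (j # q))"
    unfolding continuous_map_componentwise
  proof
    show "(\<lambda>c. \<lambda>q\<in>idx ns k. c (j # q)) ` topspace (conf_top ns (Suc k)) \<subseteq> extensional (idx ns k)"
      by auto
    show "\<forall>q\<in>idx ns k. continuous_map (conf_top ns (Suc k)) euclidean (\<lambda>c. (\<lambda>q\<in>idx ns k. c (j # q)) q)"
    proof
      fix q assume q: "q \<in> idx ns k"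
      have e: "(\<lambda>c. (\<lambda>q\<in>idx ns k. c (j # q)) q) = (\<lambda>c. c (j # q))" using q by simp
      have "j # q \<in> idx ns (Suc k)" using q j by simp
      then show "continuous_map (conf_top ns (Suc k)) euclidean (\<lambda>c. (\<lambda>q\<in>idx ns k. c (j # q)) q)"
        unfolding e by (rule proj_cont)
    qed
  qed
  show "(\<lambda>c. \<lambda>q\<in>idx ns k. c (j # q)) \<in> topspace (conf_top ns (Suc k)) \<rightarrow> conf ns k"
  proof (rule funcsetI)
    fix c assume "c \<in> topspace (conf_top ns (Suc k))"
    then have "c \<in> conf ns (Suc k)" by (simp only: topspace_conf_top)
    then show "(\<lambda>q\<in>idx ns k. c (j # q)) \<in> conf ns k" using conf_SucD(2)[of c ns k j] j by blast
  qed
qed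

lemma FF_cont:
  "\<forall>i\<in>{1..k}. ns i \<ge> 2 \<Longrightarrow> continuous_map (conf_top ns k) (confF_top (P ns k)) (FF ns k :: (nat list \<Rightarrow> 'a::real_normed_vector) \<Rightarrow> nat \<Rightarrow> 'a)"
proof (induction k)
  case 0
  have e: "(FF ns 0 :: (nat list \<Rightarrow> 'a) \<Rightarrow> nat \<Rightarrow> 'a) = (\<lambda>c. FF ns 0 (\<lambda>_. undefined))" by (rule ext) simp
  have m: "(FF ns 0 (\<lambda>_. undefined) :: nat \<Rightarrow> 'a) \<in> confF (P ns 0)" by (rule FF_mem) auto
  show ?case
    by (subst e, rule iffD2[OF continuous_map_const], rule disjI2) (simp only: topspace_confF_top m)
next
  case (Suc k)
  let ?m = "ns (Suc k)" and ?n = "P ns k" and ?N = "P ns (Suc k)"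
  have h1: "\<forall>i\<in>{1..k}. ns i \<ge> 2" using Suc.prems(1) by auto
  have m2: "?m \<ge> 2" using Suc.prems by auto
  note IH = Suc.IH[OF h1]
  show ?case
    unfolding confF_top_def continuous_map_in_subtopology
  proof
    show "continuous_map (conf_top ns (Suc k)) (product_topology (\<lambda>_. euclidean) {..<?N}) (FF ns (Suc k) :: (nat list \<Rightarrow> 'a) \<Rightarrow> nat \<Rightarrow> 'a)"
      unfolding continuous_map_componentwise
    proof
      show "(FF ns (Suc k) :: (nat list \<Rightarrow> 'a) \<Rightarrow> nat \<Rightarrow> 'a) ` topspace (conf_top ns (Suc k)) \<subseteq> extensional {..<?N}"
      proof
        fix y assume "y \<in> FF ns (Suc k) ` topspace (conf_top ns (Suc k))"
        then obtain c where "y = FF ns (Suc k) c" by blast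
        then show "y \<in> extensional {..<?N}" unfolding FF.simps(2) by (simp only: restrict_extensional)
      qed
      show "\<forall>x\<in>{..<?N}. continuous_map (conf_top ns (Suc k)) euclidean (\<lambda>c::nat list \<Rightarrow> 'a. FF ns (Suc k) c x)"
      proof
        fix x assume "x \<in> {..<?N}"
        then have x: "x < ?N" by (simp only: lessThan_iff)
        define j where "j = x div ?n"
        define i where "i = x mod ?n"
        have j: "j < ?m" unfolding j_def using div_lt_P[OF x] .
        have i: "i < ?n" unfolding i_def using mod_lt_P[OF x] .
        define h where "h = (\<lambda>c::nat list \<Rightarrow> 'a. FF ns k (\<lambda>q\<in>idx ns k. c (j # q)) i)"
        have e: "(\<lambda>c::nat list \<Rightarrow> 'a. FF ns (Suc k) c x) =
           (\<lambda>c::nat list \<Rightarrow> 'a. c [j] + rad ?m c *\<^sub>R ((1 / (1 + norm (h c))) *\<^sub>R h c))"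
          by (rule ext) (simp only: FF_Suc_app[OF x] phi_def h_def j_def i_def)
        have pi: "continuous_map (confF_top ?n) euclidean (\<lambda>y::nat \<Rightarrow> 'a. y i)"
          unfolding confF_top_def using i
          by (intro continuous_map_from_subtopology continuous_map_product_projection) simp
        have "continuous_map (conf_top ns (Suc k)) (confF_top ?n) (FF ns k \<circ> (\<lambda>c::nat list \<Rightarrow> 'a. \<lambda>q\<in>idx ns k. c (j # q)))"
          by (rule continuous_map_compose[OF sub_cont[of j ns k, OF j] IH])
        then have "continuous_map (conf_top ns (Suc k)) euclidean
                ((\<lambda>y. y i) \<circ> (FF ns k \<circ> (\<lambda>c::nat list \<Rightarrow> 'a. \<lambda>q\<in>idx ns k. c (j # q))))"
          by (rule continuous_map_compose[OF _ pi])
        then have hc: "continuous_map (conf_top ns (Suc k)) euclidean h"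
          unfolding h_def by (simp only: o_def)
        have "continuous_map (conf_top ns (Suc k)) euclidean (\<lambda>c::nat list \<Rightarrow> 'a. c [j])"
          using j by (intro proj_cont) simp
        moreover have "continuous_map (conf_top ns (Suc k)) euclideanreal (\<lambda>c::nat list \<Rightarrow> 'a. 1 / (1 + norm (h c)))"
        proof (rule continuous_map_real_divide)
          show "continuous_map (conf_top ns (Suc k)) euclideanreal (\<lambda>c::nat list \<Rightarrow> 'a. 1 + norm (h c))"
            by (intro continuous_map_add continuous_map_norm hc continuous_map_canonical_const)
          fix c show "1 + norm (h c) \<noteq> 0" by (smt (verit) norm_ge_zero)
        qed simp
        ultimately show "continuous_map (conf_top ns (Suc k)) euclidean (\<lambda>c::nat list \<Rightarrow> 'a. FF ns (Suc k) c x)"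
          unfolding e
          by (rule continuous_map_add[OF _ cm_scaleR[OF rad_cont[of ns k, OF m2] cm_scaleR]]) (rule hc)+
      qed
    qed
    show "(FF ns (Suc k) :: (nat list \<Rightarrow> 'a) \<Rightarrow> nat \<Rightarrow> 'a) \<in> topspace (conf_top ns (Suc k)) \<rightarrow> confF ?N"
      unfolding topspace_conf_top using FF_mem[OF Suc.prems] by blast
  qed
qed

theorem lemma4p3:
  fixes ns :: "nat \<Rightarrow> nat" and k :: nat
  assumes "k \<ge> 1" and "\<forall>i\<in>{1..k}. ns i \<ge> 2"
  shows "\<exists>f :: (nat list \<Rightarrow> 'a::euclidean_space) \<Rightarrow> (nat \<Rightarrow> 'a).
           continuous_map (conf_top ns k) (confF_top (\<Prod>i\<in>{1..k}. ns i)) f \<and>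
           (\<forall>g\<in>sigma ns k. \<forall>c\<in>conf ns k.
              f (act ns k g c) = permact (\<Prod>i\<in>{1..k}. ns i) (emb ns k g) (f c))"
  using FF_cont[OF assms(2)] FF_equi[OF assms(2)] by blast

end
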